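(* Let $p\in(0,1)$ and let $\beta:\mathbb{N}\to\mathbb{R}$ be a function such that $|\beta(n)|=O(\sqrt{n})$ and $\lim_{n\to\infty}|\beta(n)|=\infty$. Then for all sufficiently large $n$, $$\frac{B^{\lfloor np\rfloor}_n(p)}{B^{\lfloor np\rfloor-\lfloor\beta(n)\rfloor}_n(p)}\leq \exp\!\Big(\frac{1}{p(1-p)}\cdot\frac{\lfloor\beta(n)\rfloor^2}{n}\Big).$$
   Context: For $p\in(0,1)$, $n\in\mathbb{N}$ and $i\in\mathbb{Z}$, $B_n^i(p)=\binom{n}{i}p^i(1-p)^{n-i}$ if $0\leq i\leq n$ and $B_n^i(p)=0$ otherwise. For $f,g:\mathbb{N}\to\mathbb{R}^+_0$, $f(n)=O(g(n))$ means there is $C>0$ with $f(n)\leq Cg(n)$ for all sufficiently large $n$. *)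

theory Defs
  imports "HOL-Analysis.Analysis" "HOL-Library.Landau_Symbols"
begin

definition binom_prob :: "nat \<Rightarrow> int \<Rightarrow> real \<Rightarrow> real" where
  "binom_prob n i p = (if 0 \<le> i \<and> i \<le> int n
     then real (n choose nat i) * p ^ nat i * (1 - p) ^ (n - nat i) else 0)"

end

theory Submission
  imports Defs
begin

lemma bp_nat: "i \<le> n \<Longrightarrow> binom_prob n (int i) p = real (n choose i) * p ^ i * (1 - p) ^ (n - i)"
  by (simp add: binom_prob_def)

lemma bp_pos: "i \<le> n \<Longrightarrow> 0 < p \<Longrightarrow> p < 1 \<Longrightarrow> binom_prob n (int i) p > 0"
  by (simp add: bp_nat)

lemma bp_step:
  assumes "Suc l \<le> n"
  shows "binom_prob n (int (Suc l)) p * (real (Suc l) * (1 - p)) = binom_prob n (int l) p * (real (n - l) * p)"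
proof -
  have c: "(n choose Suc l) * Suc l = (n choose l) * (n - l)"
    by (metis binomial_absorb_comp binomial_absorption mult.commute)
  hence c': "real (n choose Suc l) * real (Suc l) = real (n choose l) * real (n - l)"
    by (metis of_nat_mult)
  have e: "n - l = Suc (n - Suc l)" using assms by simp
  have "binom_prob n (int (Suc l)) p * (real (Suc l) * (1 - p))
     = (real (n choose Suc l) * p ^ Suc l * (1 - p) ^ (n - Suc l)) * (real (Suc l) * (1 - p))"
    by (simp only: bp_nat[OF assms])
  also have "\<dots> = (real (n choose Suc l) * real (Suc l)) * p ^ Suc l * (1 - p) ^ Suc (n - Suc l)"
    by (simp only: power_Suc) (simp only: mult_ac)
  also have "\<dots> = (real (n choose l) * real (n - l)) * p ^ Suc l * (1 - p) ^ Suc (n - Suc l)"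
    by (simp only: c')
  also have "\<dots> = binom_prob n (int l) p * (real (n - l) * p)"
    using assms by (simp only: bp_nat e[symmetric] power_Suc) (simp add: e mult_ac)
  finally show ?thesis .
qed

lemma solve_ratio:
  fixes x y a b :: real
  assumes "x * a = y * b" "a \<noteq> 0"
  shows "x = y * (b / a)"
  using assms by (simp add: field_simps)

lemma bp_up:
  assumes "j + m \<le> n" "0<p" "p<1"
  shows "binom_prob n (int (j+m)) p = binom_prob n (int j) p *
     (\<Prod>t<m. real (n - (j+t)) * p / (real (j+t+1) * (1-p)))"
  using assms(1)
proof (induction m)
  case 0 then show ?case by simp
next
  case (Suc m)
  have st: "binom_prob n (int (Suc (j+m))) p * (real (Suc (j+m)) * (1 - p))
      = binom_prob n (int (j+m)) p * (real (n - (j+m)) * p)"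
    using bp_step[of "j+m" n p] Suc.prems by simp
  have "binom_prob n (int (j + Suc m)) p
      = binom_prob n (int (j+m)) p * (real (n - (j+m)) * p / (real (j+m+1) * (1-p)))"
    using solve_ratio[OF st] assms(2,3) by (simp add: add.commute)
  then show ?case using Suc by simp
qed

lemma bp_down:
  assumes "k + m \<le> n" "0<p" "p<1"
  shows "binom_prob n (int k) p = binom_prob n (int (k+m)) p *
     (\<Prod>t<m. real (k+t+1) * (1-p) / (real (n - (k+t)) * p))"
  using assms(1)
proof (induction m)
  case 0 then show ?case by simp
next
  case (Suc m)
  have st: "binom_prob n (int (Suc (k+m))) p * (real (Suc (k+m)) * (1 - p))
      = binom_prob n (int (k+m)) p * (real (n - (k+m)) * p)"
    using bp_step[of "k+m" n p] Suc.prems by simp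
  have pos: "real (n - (k+m)) > 0" using Suc.prems by simp
  have "binom_prob n (int (k+m)) p
      = binom_prob n (int (k + Suc m)) p * (real (k+m+1) * (1-p) / (real (n - (k+m)) * p))"
    using solve_ratio[OF st[symmetric]] assms(2,3) pos by (simp add: add.commute mult.commute)
  then show ?case using Suc by simp
qed

lemma frac1: "(x::real) \<noteq> 0 \<Longrightarrow> (x + y) / x = 1 + y / x"
  by (simp add: field_simps)

lemma eqlem: "(N::real) \<noteq> 0 \<Longrightarrow> p \<noteq> 0 \<Longrightarrow> q \<noteq> 0 \<Longrightarrow> D \<noteq> 0 \<Longrightarrow>
   A*p/(D*q) = (A/(N*q))*(N*p/D)"
  by (simp add: field_simps)

lemma R1:
  fixes N p s a M :: real
  assumes "N>0" "0<p" "p<1" "0 \<le> s" "s \<le> a" "s \<le> M" "M < N*p"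
  shows "(N*(1-p)+s+1)*p/((N*p-s)*(1-p)) \<le> exp((a+1)/(N*(1-p)) + a/(N*p-M))"
proof -
  have q: "N*(1-p) > 0" using assms by simp
  have d: "N*p - s > 0" using assms by simp
  have 1: "(N*(1-p)+s+1)/(N*(1-p)) \<le> exp((a+1)/(N*(1-p)))"
  proof -
    have "(N*(1-p)+s+1)/(N*(1-p)) = 1 + (s+1)/(N*(1-p))" using q assms frac1[of "N*(1-p)" "s+1"] by (simp add: add.assoc)
    also have "\<dots> \<le> exp ((s+1)/(N*(1-p)))" by (rule exp_ge_add_one_self)
    also have "\<dots> \<le> exp((a+1)/(N*(1-p)))" using q assms by (simp add: divide_right_mono)
    finally show ?thesis .
  qed
  have 2: "N*p/(N*p-s) \<le> exp(a/(N*p-M))"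
  proof -
    have "N*p/(N*p-s) = 1 + s/(N*p-s)" using d by (simp add: field_simps)
    also have "\<dots> \<le> exp (s/(N*p-s))" by (rule exp_ge_add_one_self)
    also have "\<dots> \<le> exp(a/(N*p-M))" using assms d by (simp add: frac_le)
    finally show ?thesis .
  qed
  have eq: "(N*(1-p)+s+1)*p/((N*p-s)*(1-p)) = ((N*(1-p)+s+1)/(N*(1-p))) * (N*p/(N*p-s))"
    using q d assms eqlem[of N p "1-p" "N*p-s" "N*(1-p)+s+1"] by simp
  have "((N*(1-p)+s+1)/(N*(1-p))) * (N*p/(N*p-s)) \<le> exp((a+1)/(N*(1-p))) * exp(a/(N*p-M))"
    by (rule mult_mono[OF 1 2]) (use q d assms in auto)
  thus ?thesis using eq by (simp add: exp_add)
qed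

lemma R2:
  fixes N p s a M :: real
  assumes "N>0" "0<p" "p<1" "0 \<le> s" "s \<le> a+1" "0 \<le> a" "s \<le> M" "M < N*(1-p)"
  shows "(N*p+s)*(1-p)/((N*(1-p)-s+1)*p) \<le> exp((a+1)/(N*p) + a/(N*(1-p)-M))"
proof -
  have q: "N*p > 0" using assms by simp
  have d: "N*(1-p) - s + 1 > 0" using assms by simp
  have dM: "N*(1-p) - M > 0" using assms by simp
  have 1: "(N*p+s)/(N*p) \<le> exp((a+1)/(N*p))"
  proof -
    have "(N*p+s)/(N*p) = 1 + s/(N*p)" using q assms frac1[of "N*p" "s"] by simp
    also have "\<dots> \<le> exp (s/(N*p))" by (rule exp_ge_add_one_self)
    also have "\<dots> \<le> exp((a+1)/(N*p))" using q assms by (simp add: divide_right_mono)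
    finally show ?thesis .
  qed
  have 2: "N*(1-p)/(N*(1-p)-s+1) \<le> exp(a/(N*(1-p)-M))"
  proof -
    have "N*(1-p)/(N*(1-p)-s+1) = 1 + (s-1)/(N*(1-p)-s+1)" using d by (simp add: field_simps)
    also have "\<dots> \<le> exp ((s-1)/(N*(1-p)-s+1))" by (rule exp_ge_add_one_self)
    also have "(s-1)/(N*(1-p)-s+1) \<le> a/(N*(1-p)-M)"
    proof (cases "s \<le> 1")
      case True
      have "(s-1)/(N*(1-p)-s+1) \<le> 0" using True d by (simp add: divide_nonpos_pos)
      also have "0 \<le> a/(N*(1-p)-M)" using assms dM by simp
      finally show ?thesis .
    next
      case False
      show ?thesis using False assms d dM by (intro frac_le) auto
    qed
    hence "exp ((s-1)/(N*(1-p)-s+1)) \<le> exp(a/(N*(1-p)-M))" by simp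
    finally show ?thesis .
  qed
  have eq: "(N*p+s)*(1-p)/((N*(1-p)-s+1)*p) = ((N*p+s)/(N*p)) * (N*(1-p)/(N*(1-p)-s+1))"
    using q d assms eqlem[of N "1-p" p "N*(1-p)-s+1" "N*p+s"] by simp
  have "((N*p+s)/(N*p)) * (N*(1-p)/(N*(1-p)-s+1)) \<le> exp((a+1)/(N*p)) * exp(a/(N*(1-p)-M))"
    by (rule mult_mono[OF 1 2]) (use q d assms in auto)
  thus ?thesis using eq by (simp add: exp_add)
qed

lemma gauss_real: "(\<Sum>t<m. real t) = real m * (real m - 1) / 2"
  by (induction m) (auto simp: field_simps)

lemma lin_sum: "(\<Sum>t<m. u + v * real t) = real m * u + v * (real m * (real m - 1) / 2)"
  by (simp add: sum.distrib sum_distrib_left[symmetric] gauss_real)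

lemma fin1:
  fixes n m p B :: real
  assumes "0<p" "p<1" "n>0" "m \<ge> 6" "B \<le> 3/(2*n*p)" "B \<ge> 0"
  shows "1/(n*(1-p))*m*(m+3)/2 + B*m*(m+1)/2 \<le> 1/(p*(1-p)) * m^2 / n"
proof -
  have "B*m*(m+1)/2 \<le> 3/(2*n*p)*m*(m+1)/2" using assms by (intro divide_right_mono mult_right_mono) auto
  moreover have "1/(n*(1-p))*m*(m+3)/2 + 3/(2*n*p)*m*(m+1)/2 = m * (2*p*(m+3) + 3*(1-p)*(m+1)) / (4*n*p*(1-p))"
    using assms by (simp add: field_simps)
  moreover have "1/(p*(1-p)) * m^2 / n = m * (4*m) / (4*n*p*(1-p))"
    using assms by (simp add: field_simps power2_eq_square)
  moreover have "2*p*(m+3) + 3*(1-p)*(m+1) \<le> 4*m"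
  proof -
    have "0 \<le> (m-3)*(1+p)" using assms by simp
    thus ?thesis by (simp add: algebra_simps)
  qed
  hence "m * (2*p*(m+3) + 3*(1-p)*(m+1)) / (4*n*p*(1-p)) \<le> m * (4*m) / (4*n*p*(1-p))"
    using assms by (intro divide_right_mono mult_left_mono) auto
  ultimately show ?thesis by linarith
qed

lemma fin2:
  fixes n m p B :: real
  assumes "0<p" "p<1" "n>0" "m \<ge> 2" "B \<le> 3/(2*n*(1-p))" "B \<ge> 0"
  shows "1/(n*p)*m*(m+1)/2 + B*m*(m-1)/2 \<le> 1/(p*(1-p)) * m^2 / n"
proof -
  have "B*m*(m-1)/2 \<le> 3/(2*n*(1-p))*m*(m-1)/2" using assms by (intro divide_right_mono mult_right_mono) auto
  moreover have "1/(n*p)*m*(m+1)/2 + 3/(2*n*(1-p))*m*(m-1)/2 = m * (2*(1-p)*(m+1) + 3*p*(m-1)) / (4*n*p*(1-p))"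
    using assms by (simp add: field_simps)
  moreover have "1/(p*(1-p)) * m^2 / n = m * (4*m) / (4*n*p*(1-p))"
    using assms by (simp add: field_simps power2_eq_square)
  moreover have "2*(1-p)*(m+1) + 3*p*(m-1) \<le> 4*m"
  proof -
    have "m*p \<le> m" using assms by simp
    moreover have "2*(1-p)*(m+1) + 3*p*(m-1) = 2*m + m*p + 2 - 5*p" by (simp add: algebra_simps)
    ultimately show ?thesis using assms by linarith
  qed
  hence "m * (2*(1-p)*(m+1) + 3*p*(m-1)) / (4*n*p*(1-p)) \<le> m * (4*m) / (4*n*p*(1-p))"
    using assms by (intro divide_right_mono mult_left_mono) auto
  ultimately show ?thesis by linarith
qed

lemma case1:
  fixes n j m k :: nat and p :: real
  assumes p: "0<p" "p<1" and n: "n > 0" and kn: "k \<le> n"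
    and kx: "real k \<le> real n * p" "real n * p < real k + 1"
    and jm: "j + m = k" and m6: "6 \<le> m" and mx: "3 * real m \<le> real n * p"
  shows "binom_prob n (int k) p / binom_prob n (int j) p \<le> exp (1 / (p * (1 - p)) * (real m)^2 / real n)"
proof -
  define A where "A = 1/(real n*(1-p))"
  define B where "B = 1/(real n*p - real m)"
  define e where "e = (\<lambda>t::nat. (real m - real t + 1) * A + (real m - real t) * B)"
  have jmr: "real j + real m = real k" using jm by (metis of_nat_add)
  have Bj: "binom_prob n (int j) p > 0" using bp_pos[of j n p] jm kn p by simp
  have ratio: "binom_prob n (int k) p / binom_prob n (int j) p
      = (\<Prod>t<m. real (n - (j+t)) * p / (real (j+t+1) * (1-p)))"
    using bp_up[of j m n p] jm kn p Bj by simp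
  have each: "real (n - (j+t)) * p / (real (j+t+1) * (1-p)) \<le> exp (e t)" if t: "t < m" for t
  proof -
    define s where "s = real n * p - real (j+t+1)"
    have jtn: "j + t \<le> n" using t jm kn by simp
    have h1: "real (n - (j+t)) = real n * (1-p) + s + 1" using jtn by (simp add: s_def of_nat_diff algebra_simps)
    have h2: "real (j+t+1) = real n * p - s" by (simp add: s_def)
    have "real (n - (j+t)) * p / (real (j+t+1) * (1-p)) = (real n*(1-p)+s+1)*p/((real n*p-s)*(1-p))"
      by (simp only: h1 h2)
    also have "\<dots> \<le> exp((real m - real t+1)/(real n*(1-p)) + (real m - real t)/(real n*p-real m))"
    proof (rule R1)
      have "real t + 1 \<le> real m" using t by linarith
      then show "0 \<le> s" using jmr kx by (simp add: s_def)
      show "s \<le> real m - real t" using jmr kx by (simp add: s_def)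
      show "s \<le> real m" using jmr kx by (simp add: s_def)
      show "real m < real n * p" using mx m6 by linarith
    qed (use n p in auto)
    finally show ?thesis by (simp add: e_def A_def B_def)
  qed
  have "(\<Prod>t<m. real (n - (j+t)) * p / (real (j+t+1) * (1-p))) \<le> (\<Prod>t<m. exp (e t))"
    by (rule prod_mono) (use each p in auto)
  also have "\<dots> = exp (\<Sum>t<m. e t)" by (simp add: exp_sum)
  also have "(\<Sum>t<m. e t) = (\<Sum>t<m. ((real m + 1) * A + real m * B) + (-(A+B)) * real t)"
    by (rule sum.cong) (simp_all add: e_def algebra_simps)
  also have "\<dots> = real m * ((real m + 1) * A + real m * B) + (-(A+B)) * (real m * (real m - 1) / 2)"
    by (rule lin_sum)
  also have "\<dots> = A*real m*(real m+3)/2 + B*real m*(real m+1)/2"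
    by (simp add: field_simps)
  also have "\<dots> \<le> 1 / (p * (1 - p)) * (real m)^2 / real n"
    unfolding A_def
  proof (rule fin1)
    have "real n * p - real m \<ge> 2 * real n * p / 3" using mx by linarith
    moreover have "2 * real n * p / 3 > 0" using n p by simp
    ultimately have "1/(real n*p - real m) \<le> 1/(2 * real n * p / 3)"
      by (intro frac_le) auto
    thus "B \<le> 3/(2*real n*p)" unfolding B_def by simp
    show "0 \<le> B" unfolding B_def using mx m6 by simp
  qed (use n p m6 in auto)
  finally show ?thesis using ratio by simp
qed


lemma case2:
  fixes n m k :: nat and p :: real
  assumes p: "0<p" "p<1" and n: "n > 0" and kn: "k + m \<le> n"
    and kx: "real k \<le> real n * p" "real n * p < real k + 1"
    and m6: "2 \<le> m" and mx: "3 * real m \<le> real n * (1-p)"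
  shows "binom_prob n (int k) p / binom_prob n (int (k+m)) p \<le> exp (1 / (p * (1 - p)) * (real m)^2 / real n)"
proof -
  define A where "A = 1/(real n*p)"
  define B where "B = 1/(real n*(1-p) - real m)"
  define e where "e = (\<lambda>t::nat. (real t + 1) * A + real t * B)"
  have Bj: "binom_prob n (int (k+m)) p > 0" using bp_pos[of "k+m" n p] kn p by simp
  have ratio: "binom_prob n (int k) p / binom_prob n (int (k+m)) p
      = (\<Prod>t<m. real (k+t+1) * (1-p) / (real (n - (k+t)) * p))"
    using bp_down[of k m n p] kn p Bj by simp
  have each: "real (k+t+1) * (1-p) / (real (n - (k+t)) * p) \<le> exp (e t)" if t: "t < m" for t
  proof -
    define s where "s = real (k+t+1) - real n * p"
    have jtn: "k + t \<le> n" using t kn by simp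
    have h2: "real (n - (k+t)) = real n * (1-p) - s + 1" using jtn by (simp add: s_def of_nat_diff algebra_simps)
    have h1: "real (k+t+1) = real n * p + s" by (simp add: s_def)
    have "real (k+t+1) * (1-p) / (real (n - (k+t)) * p) = (real n*p+s)*(1-p)/((real n*(1-p)-s+1)*p)"
      by (simp only: h1 h2)
    also have "\<dots> \<le> exp((real t+1)/(real n*p) + real t/(real n*(1-p)-real m))"
    proof (rule R2)
      have "real t + 1 \<le> real m" using t by linarith
      then show "0 \<le> s" using kx by (simp add: s_def)
      show "s \<le> real t + 1" using kx by (simp add: s_def)
      show "s \<le> real m" using kx \<open>real t + 1 \<le> real m\<close> by (simp add: s_def)
      show "real m < real n * (1-p)" using mx m6 by linarith
    qed (use n p in auto)
    finally show ?thesis by (simp add: e_def A_def B_def)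
  qed
  have "(\<Prod>t<m. real (k+t+1) * (1-p) / (real (n - (k+t)) * p)) \<le> (\<Prod>t<m. exp (e t))"
    by (rule prod_mono) (use each p in auto)
  also have "\<dots> = exp (\<Sum>t<m. e t)" by (simp add: exp_sum)
  also have "(\<Sum>t<m. e t) = (\<Sum>t<m. A + (A+B) * real t)"
    by (rule sum.cong) (simp_all add: e_def algebra_simps)
  also have "\<dots> = real m * A + (A+B) * (real m * (real m - 1) / 2)"
    by (rule lin_sum)
  also have "\<dots> = A*real m*(real m+1)/2 + B*real m*(real m-1)/2"
    by (simp add: field_simps)
  also have "\<dots> \<le> 1 / (p * (1 - p)) * (real m)^2 / real n"
    unfolding A_def
  proof (rule fin2)
    have pos: "real n * (1-p) - real m \<ge> 2 * real n * (1-p) / 3" using mx by linarith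
    moreover have "2 * real n * (1-p) / 3 > 0" using n p by simp
    ultimately have "1/(real n*(1-p) - real m) \<le> 1/(2 * real n * (1-p) / 3)"
      by (intro frac_le) auto
    thus "B \<le> 3/(2*real n*(1-p))" unfolding B_def by simp
    show "0 \<le> B" unfolding B_def using mx m6 by simp
  qed (use n p m6 in auto)
  finally show ?thesis using ratio by simp
qed


lemma sqrt_event:
  fixes C d :: real
  assumes "C > 0" "d > 0"
  shows "eventually (\<lambda>n::nat. 3*(C * sqrt (real n)+1) \<le> real n * d) sequentially"
proof -
  define N where "N = nat \<lceil>(3*(C+1)/d)^2\<rceil> + 1"
  have "3*(C * sqrt (real n)+1) \<le> real n * d" if nN: "n \<ge> N" for n
  proof -
    have n1: "real n \<ge> (3*(C+1)/d)^2" "real n \<ge> 1" using nN unfolding N_def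
      by (auto simp: nat_le_iff ceiling_le_iff) linarith+
    have s1: "sqrt (real n) \<ge> 1" using n1 by simp
    have s2: "sqrt (real n) \<ge> 3*(C+1)/d"
      using n1 real_sqrt_le_mono[OF n1(1)] assms by simp
    have "3*(C * sqrt (real n)+1) \<le> 3*(C+1)* sqrt (real n)" using s1 by (simp add: algebra_simps)
    also have "\<dots> \<le> (d * sqrt (real n)) * sqrt (real n)"
    proof -
      have "3*(C+1) \<le> d * sqrt (real n)" using s2 assms by (simp add: field_simps)
      thus ?thesis by (rule mult_right_mono) simp
    qed
    also have "\<dots> = real n * d" by (simp add: algebra_simps)
    finally show ?thesis .
  qed
  thus ?thesis unfolding eventually_sequentially by blast
qed

theorem lemma3:
  fixes p :: real and \<beta> :: "nat \<Rightarrow> real"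
  assumes "0 < p" "p < 1"
    and "(\<lambda>n. \<bar>\<beta> n\<bar>) \<in> O(\<lambda>n. sqrt (real n))"
    and "filterlim (\<lambda>n. \<bar>\<beta> n\<bar>) at_top sequentially"
  shows "\<forall>\<^sub>F n in sequentially.
    binom_prob n \<lfloor>real n * p\<rfloor> p / binom_prob n (\<lfloor>real n * p\<rfloor> - \<lfloor>\<beta> n\<rfloor>) p
      \<le> exp (1 / (p * (1 - p)) * (real_of_int \<lfloor>\<beta> n\<rfloor>)\<^sup>2 / real n)"
proof -
  obtain C where C: "C > 0" "eventually (\<lambda>n. norm \<bar>\<beta> n\<bar> \<le> C * norm (sqrt (real n))) sequentially"
    using assms(3) by (elim landau_o.bigE)
  define d where "d = min p (1-p)"
  have d: "d > 0" using assms by (simp add: d_def)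
  have E1: "eventually (\<lambda>n. 7 \<le> \<bar>\<beta> n\<bar>) sequentially"
    using assms(4) by (simp add: filterlim_at_top)
  have E3: "eventually (\<lambda>n::nat. 3*(C * sqrt (real n)+1) \<le> real n * d) sequentially"
    by (rule sqrt_event[OF C(1) d])
  have E4: "eventually (\<lambda>n::nat. n > 0) sequentially" by (rule eventually_gt_at_top)
  show ?thesis using E1 C(2) E3 E4
  proof eventually_elim
    case (elim n)
    have bC: "\<bar>\<beta> n\<bar> \<le> C * sqrt (real n)" using elim(2) by simp
    define b where "b = \<lfloor>\<beta> n\<rfloor>"
    define k where "k = \<lfloor>real n * p\<rfloor>"
    have np0: "0 \<le> real n * p" using assms by simp
    have npn: "real n * p \<le> real n" using assms by (simp add: mult_left_le)
    define kk where "kk = nat k"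
    have kkk: "int kk = k" using np0 by (simp add: kk_def k_def)
    have kx1: "real kk \<le> real n * p" using kkk by (metis k_def of_int_floor_le of_int_of_nat_eq)
    have kx2: "real n * p < real kk + 1" using kkk
      by (metis k_def real_of_int_floor_add_one_gt of_int_of_nat_eq)
    have kkn: "kk \<le> n" using kx1 npn by linarith
    have b1: "\<bar>real_of_int b\<bar> \<le> \<bar>\<beta> n\<bar> + 1" unfolding b_def
      by (smt (verit) of_int_floor_le real_of_int_floor_add_one_gt)
    have b2: "6 \<le> \<bar>real_of_int b\<bar>" unfolding b_def using elim(1)
      by (smt (verit) of_int_floor_le real_of_int_floor_add_one_gt)
    have b3': "\<bar>real_of_int b\<bar> \<le> C * sqrt (real n) + 1" using b1 bC by linarith
    have b3: "3 * \<bar>real_of_int b\<bar> \<le> real n * d" using order_trans[OF mult_left_mono[OF b3'] elim(3)] by simp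
    have dp: "real n * d \<le> real n * p" "real n * d \<le> real n * (1-p)" by (auto simp: d_def intro: mult_left_mono)
    have npos: "n > 0" using elim(4) .
    have goal: "binom_prob n k p / binom_prob n (k - b) p
       \<le> exp (1 / (p * (1 - p)) * (real_of_int b)\<^sup>2 / real n)"
    proof (cases "b \<ge> 0")
      case True
      define m where "m = nat b"
      have mb: "int m = b" using True by (simp add: m_def)
      have mr: "real m = real_of_int b" using mb by (metis of_int_of_nat_eq)
      show ?thesis
      proof (cases "k - b < 0")
        case True
        hence "binom_prob n (k - b) p = 0" by (simp add: binom_prob_def)
        thus ?thesis by simp
      next
        case False
        define j where "j = nat (k - b)"
        have jj: "int j = k - b" using False by (simp add: j_def)
        have jm: "j + m = kk" using jj mb kkk by linarith
        have r: "binom_prob n (int kk) p / binom_prob n (int j) p \<le> exp (1 / (p * (1 - p)) * (real m)^2 / real n)"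
          by (rule case1[OF assms(1,2) npos kkn kx1 kx2 jm]) (use b2 b3 dp mr True in auto)
        thus ?thesis using jj kkk mr by simp
      qed
    next
      case False
      define m where "m = nat (-b)"
      have mb: "int m = -b" using False by (simp add: m_def)
      have mr: "real m = - real_of_int b" using mb by (metis of_int_minus of_int_of_nat_eq)
      have sq: "(real m)^2 = (real_of_int b)^2" using mr by simp
      show ?thesis
      proof (cases "kk + m \<le> n")
        case False
        hence "binom_prob n (k - b) p = 0" using mb kkk by (simp add: binom_prob_def)
        thus ?thesis by simp
      next
        case True
        have kb: "k - b = int (kk + m)" using mb kkk by simp
        have r: "binom_prob n (int kk) p / binom_prob n (int (kk+m)) p \<le> exp (1 / (p * (1 - p)) * (real m)^2 / real n)"
          by (rule case2[OF assms(1,2) npos True kx1 kx2]) (use b2 b3 dp mr False in auto)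
        have kb2: "int kk - b = int kk + int m" using mb by simp
        show ?thesis unfolding sq[symmetric] kkk[symmetric] kb2 using r by simp
      qed
    qed
    thus ?case by (simp add: b_def k_def)
  qed
qed

end
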